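(* Let $M$ be an entrywise nonnegative $m\times n$ real matrix and let $M=AW$ be a stable nonnegative matrix factorization with $A\in\mathbb{R}_{\ge0}^{m\times r}$, $W\in\mathbb{R}_{\ge0}^{r\times n}$. Then for every column index $i$, the support of $W_i$ corresponds to a linearly independent set of columns of $A$.
   Context: $W_i$ denotes the $i$-th column of $W$; the support of a vector is the set of indices of its nonzero entries. $\mathrm{aff}(A)=\{\sum_k\alpha_kA_k:\alpha_k\ge0\}$ for columns $A_k$. A subset $S\subseteq[r]$ of columns of $A$ is admissible for $v\in\mathbb{R}^m$ if $v\in\mathrm{aff}(A_S)$ ($A_S$ = columns of $A$ in $S$); a subset $T\subseteq[r]$ of rows of $W$ is admissible for a row vector $u$ if $u$ is a nonnegative combination of the rows of $W$ indexed by $T$. Lexicographic ordering on subsets of $[r]$: if $|S|<|T|$ then $S$ precedes $T$; equal-size subsets compared by standard lexicographic order. $M=AW$ is stable if, with $S_i$ the lexicographically first subset of columns of $A$ admissible for the column $M_i$ and $T_j$ the lexicographically first subset of rows of $W$ admissible for the row $M^j$, each $W_i$ is supported in $S_i$ and each row $A^j$ of $A$ is supported in $T_j$. *)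

theory Defs
  imports Complex_Main
begin

text \<open>Matrices are represented as functions nat => nat => real with explicit
dimensions; an m x r matrix A has entries A j k for j < m, k < r.
Index sets [r] are {..<r}.\<close>

definition nonneg_mat :: "nat \<Rightarrow> nat \<Rightarrow> (nat \<Rightarrow> nat \<Rightarrow> real) \<Rightarrow> bool" where
  "nonneg_mat p q X \<longleftrightarrow> (\<forall>j<p. \<forall>k<q. 0 \<le> X j k)"

definition is_product :: "nat \<Rightarrow> nat \<Rightarrow> nat \<Rightarrow> (nat \<Rightarrow> nat \<Rightarrow> real) \<Rightarrow>
    (nat \<Rightarrow> nat \<Rightarrow> real) \<Rightarrow> (nat \<Rightarrow> nat \<Rightarrow> real) \<Rightarrow> bool" where
  "is_product m r n M A W \<longleftrightarrow> (\<forall>j<m. \<forall>i<n. M j i = (\<Sum>k<r. A j k * W k i))"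

definition col_admissible :: "nat \<Rightarrow> nat \<Rightarrow> (nat \<Rightarrow> nat \<Rightarrow> real) \<Rightarrow> (nat \<Rightarrow> real) \<Rightarrow> nat set \<Rightarrow> bool" where
  "col_admissible m r A v S \<longleftrightarrow> S \<subseteq> {..<r} \<and>
     (\<exists>\<alpha>. (\<forall>k\<in>S. 0 \<le> \<alpha> k) \<and> (\<forall>j<m. v j = (\<Sum>k\<in>S. \<alpha> k * A j k)))"

definition row_admissible :: "nat \<Rightarrow> nat \<Rightarrow> (nat \<Rightarrow> nat \<Rightarrow> real) \<Rightarrow> (nat \<Rightarrow> real) \<Rightarrow> nat set \<Rightarrow> bool" where
  "row_admissible r n W u T \<longleftrightarrow> T \<subseteq> {..<r} \<and>
     (\<exists>\<beta>. (\<forall>k\<in>T. 0 \<le> \<beta> k) \<and> (\<forall>i<n. u i = (\<Sum>k\<in>T. \<beta> k * W k i)))"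

definition lex_precedes :: "nat set \<Rightarrow> nat set \<Rightarrow> bool" where
  "lex_precedes S T \<longleftrightarrow> card S < card T \<or>
     (card S = card T \<and>
      (sorted_list_of_set S, sorted_list_of_set T) \<in> lexord {(a, b). a < b})"

definition lex_first :: "(nat set \<Rightarrow> bool) \<Rightarrow> nat set \<Rightarrow> bool" where
  "lex_first P S \<longleftrightarrow> P S \<and> (\<forall>T. P T \<longrightarrow> \<not> lex_precedes T S)"

definition supp :: "nat \<Rightarrow> (nat \<Rightarrow> real) \<Rightarrow> nat set" where
  "supp p v = {k. k < p \<and> v k \<noteq> 0}"

definition stable_factorization :: "nat \<Rightarrow> nat \<Rightarrow> nat \<Rightarrow> (nat \<Rightarrow> nat \<Rightarrow> real) \<Rightarrow>
    (nat \<Rightarrow> nat \<Rightarrow> real) \<Rightarrow> (nat \<Rightarrow> nat \<Rightarrow> real) \<Rightarrow> bool" where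
  "stable_factorization m r n M A W \<longleftrightarrow>
     (\<forall>i<n. \<forall>S. lex_first (col_admissible m r A (\<lambda>j. M j i)) S \<longrightarrow>
                supp r (\<lambda>k. W k i) \<subseteq> S) \<and>
     (\<forall>j<m. \<forall>T. lex_first (row_admissible r n W (\<lambda>i. M j i)) T \<longrightarrow>
                supp r (\<lambda>k. A j k) \<subseteq> T)"

definition cols_lin_indep :: "nat \<Rightarrow> (nat \<Rightarrow> nat \<Rightarrow> real) \<Rightarrow> nat set \<Rightarrow> bool" where
  "cols_lin_indep m A S \<longleftrightarrow>
     (\<forall>c. (\<forall>j<m. (\<Sum>k\<in>S. c k * A j k) = 0) \<longrightarrow> (\<forall>k\<in>S. c k = 0))"

end

theory Submission
  imports Defs
begin

lemma lex_first_exists: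
  fixes P :: "nat set \<Rightarrow> bool"
  assumes ex: "P S0" and sub: "\<And>S. P S \<Longrightarrow> S \<subseteq> {..<r}"
  shows "\<exists>S. lex_first P S"
proof -
  define k where "k = (LEAST k. \<exists>T. P T \<and> card T = k)"
  have hk: "\<exists>T. P T \<and> card T = k" unfolding k_def by (rule LeastI_ex) (use ex in blast)
  have kmin: "\<And>T. P T \<Longrightarrow> k \<le> card T" unfolding k_def by (rule Least_le) blast
  define F where "F = {T. P T \<and> card T = k}"
  have finF: "finite F" using sub
    by (intro finite_subset[of F "Pow {..<r}"]) (auto simp: F_def)
  define L where "L = lexord {(a::nat, b). a < b}"
  have transL: "trans L" unfolding L_def by (rule lexord_transI) (auto simp: trans_def)
  have irrL: "\<And>x. (x, x) \<notin> L" unfolding L_def by (rule lexord_irreflexive) auto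
  define R where "R = {(T, S). T \<in> F \<and> S \<in> F \<and> (sorted_list_of_set T, sorted_list_of_set S) \<in> L}"
  have finR: "finite R" using finF by (intro finite_subset[of R "F \<times> F"]) (auto simp: R_def)
  have transR: "trans R" using transL unfolding R_def trans_def by blast
  have acyc: "acyclic R" unfolding acyclic_def using transR irrL
    by (simp add: trancl_id R_def)
  have wfR: "wf R" using finR acyc by (rule finite_acyclic_wf)
  obtain T0 where "T0 \<in> F" using hk F_def by blast
  then obtain S where SF: "S \<in> F" and Smin: "\<And>T. (T, S) \<in> R \<Longrightarrow> T \<notin> F"
    using wfE_min[OF wfR] by metis
  have "lex_first P S"
    unfolding lex_first_def lex_precedes_def
  proof (intro conjI allI impI)
    show "P S" using SF F_def by auto
    fix T assume PT: "P T"
    have cS: "card S = k" using SF F_def by auto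
    show "\<not> (card T < card S \<or> card T = card S \<and>
          (sorted_list_of_set T, sorted_list_of_set S) \<in> lexord {(a, b). a < b})"
    proof
      assume "card T < card S \<or> card T = card S \<and>
          (sorted_list_of_set T, sorted_list_of_set S) \<in> lexord {(a, b). a < b}"
      then show False
      proof
        assume "card T < card S" with kmin[OF PT] cS show False by simp
      next
        assume h: "card T = card S \<and>
          (sorted_list_of_set T, sorted_list_of_set S) \<in> lexord {(a, b). a < b}"
        then have "T \<in> F" using PT cS F_def by auto
        moreover have "(T, S) \<in> R" using h \<open>T \<in> F\<close> SF unfolding R_def L_def by auto
        ultimately show False using Smin by blast
      qed
    qed
  qed
  then show ?thesis by blast
qed

lemma lex_first_indep:
  assumes lf: "lex_first (col_admissible m r A v) S"
  shows "cols_lin_indep m A S"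
proof -
  have adm: "col_admissible m r A v S" using lf lex_first_def by blast
  have nosmall: "\<And>T. col_admissible m r A v T \<Longrightarrow> \<not> card T < card S"
    using lf unfolding lex_first_def lex_precedes_def by blast
  have Ssub: "S \<subseteq> {..<r}" using adm col_admissible_def by blast
  have finS: "finite S" using Ssub finite_subset by blast
  obtain \<alpha> where \<alpha>0: "\<forall>k\<in>S. 0 \<le> \<alpha> k" and \<alpha>v: "\<forall>j<m. v j = (\<Sum>k\<in>S. \<alpha> k * A j k)"
    using adm col_admissible_def by blast
  have remove: False if k1: "k1 \<in> S" and \<beta>0: "\<forall>k\<in>S. 0 \<le> \<beta> k"
     and \<beta>v: "\<forall>j<m. v j = (\<Sum>k\<in>S. \<beta> k * A j k)" and z: "\<beta> k1 = 0" for \<beta> k1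
  proof -
    have "col_admissible m r A v (S - {k1})"
      unfolding col_admissible_def
    proof (intro conjI exI[of _ \<beta>])
      show "S - {k1} \<subseteq> {..<r}" using Ssub by blast
      show "\<forall>k\<in>S - {k1}. 0 \<le> \<beta> k" using \<beta>0 by blast
      show "\<forall>j<m. v j = (\<Sum>k\<in>S - {k1}. \<beta> k * A j k)"
        using \<beta>v z k1 finS by (simp add: sum_diff1)
    qed
    moreover have "card (S - {k1}) < card S" using k1 finS by (meson card_Diff1_less)
    ultimately show False using nosmall by blast
  qed
  have \<alpha>pos: "\<forall>k\<in>S. 0 < \<alpha> k"
  proof
    fix k assume "k \<in> S"
    show "0 < \<alpha> k"
    proof (rule ccontr)
      assume "\<not> 0 < \<alpha> k"
      then have "\<alpha> k = 0" using \<alpha>0 \<open>k \<in> S\<close> by force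
      then show False using remove[OF \<open>k \<in> S\<close> \<alpha>0 \<alpha>v] by blast
    qed
  qed
  have main: False if c0: "\<forall>j<m. (\<Sum>k\<in>S. c k * A j k) = 0" and cpos: "\<exists>k\<in>S. 0 < c k" for c
  proof -
    define P where "P = {k\<in>S. 0 < c k}"
    have finP: "finite P" "P \<noteq> {}" using finS cpos P_def by auto
    define t where "t = Min ((\<lambda>k. \<alpha> k / c k) ` P)"
    have "t \<in> (\<lambda>k. \<alpha> k / c k) ` P"
      unfolding t_def using finP by (intro Min_in) auto
    then obtain k1 where k1: "k1 \<in> P" "t = \<alpha> k1 / c k1" by blast
    have tle: "\<And>k. k \<in> P \<Longrightarrow> t \<le> \<alpha> k / c k" using finP t_def by simp
    have tpos: "0 < t" using k1 \<alpha>pos P_def by auto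
    define \<beta> where "\<beta> k = \<alpha> k - t * c k" for k
    have \<beta>0: "\<forall>k\<in>S. 0 \<le> \<beta> k"
    proof
      fix k assume kS: "k \<in> S"
      show "0 \<le> \<beta> k"
      proof (cases "0 < c k")
        case True
        then have "k \<in> P" using kS P_def by auto
        then have "t \<le> \<alpha> k / c k" by (rule tle)
        then have "t * c k \<le> \<alpha> k" using True by (simp add: pos_le_divide_eq)
        then show ?thesis by (simp add: \<beta>_def)
      next
        case False
        then have "t * c k \<le> 0" using tpos by (simp add: mult_nonneg_nonpos)
        moreover have "0 \<le> \<alpha> k" using \<alpha>0 kS by blast
        ultimately show ?thesis unfolding \<beta>_def by linarith
      qed
    qed
    have \<beta>v: "\<forall>j<m. v j = (\<Sum>k\<in>S. \<beta> k * A j k)"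
    proof (intro allI impI)
      fix j assume j: "j < m"
      have "(\<Sum>k\<in>S. \<beta> k * A j k) = (\<Sum>k\<in>S. \<alpha> k * A j k) - t * (\<Sum>k\<in>S. c k * A j k)"
        unfolding \<beta>_def left_diff_distrib sum_subtractf sum_distrib_left
        by (simp add: mult.assoc)
      then show "v j = (\<Sum>k\<in>S. \<beta> k * A j k)" using j c0 \<alpha>v by simp
    qed
    have "\<beta> k1 = 0" using k1 P_def by (simp add: \<beta>_def)
    moreover have "k1 \<in> S" using k1 P_def by auto
    ultimately show False using remove[OF _ \<beta>0 \<beta>v] by blast
  qed
  show ?thesis unfolding cols_lin_indep_def
  proof (intro allI impI ballI)
    fix c k assume c0: "\<forall>j<m. (\<Sum>k\<in>S. c k * A j k) = 0" and kS: "k \<in> S"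
    show "c k = 0"
    proof (rule ccontr)
      assume ne: "c k \<noteq> 0"
      show False
      proof (cases "0 < c k")
        case True then show False using main[OF c0] kS by auto
      next
        case False
        then have "0 < (\<lambda>k. - c k) k" using ne by simp
        moreover have "\<forall>j<m. (\<Sum>k\<in>S. (- c k) * A j k) = 0" using c0 by (simp add: sum_negf)
        ultimately show False using main[of "\<lambda>k. - c k"] kS by auto
      qed
    qed
  qed
qed

theorem mainTheorem6:
  fixes m r n :: nat and M A W :: "nat \<Rightarrow> nat \<Rightarrow> real"
  assumes "nonneg_mat m n M"
    and "nonneg_mat m r A"
    and "nonneg_mat r n W"
    and "is_product m r n M A W"
    and "stable_factorization m r n M A W"
  shows "\<forall>i<n. cols_lin_indep m A (supp r (\<lambda>k. W k i))"
proof (intro allI impI)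
  fix i assume i: "i < n"
  have adm: "col_admissible m r A (\<lambda>j. M j i) {..<r}"
    unfolding col_admissible_def
  proof (intro conjI exI[of _ "\<lambda>k. W k i"])
    show "\<forall>k\<in>{..<r}. 0 \<le> W k i" using assms(3) i nonneg_mat_def by auto
    show "\<forall>j<m. M j i = (\<Sum>k\<in>{..<r}. W k i * A j k)"
      using assms(4) i unfolding is_product_def by (simp add: mult.commute)
  qed simp
  obtain S where S: "lex_first (col_admissible m r A (\<lambda>j. M j i)) S"
    using lex_first_exists[of "col_admissible m r A (\<lambda>j. M j i)" "{..<r}" r] adm
    unfolding col_admissible_def by blast
  have ind: "cols_lin_indep m A S" using lex_first_indep[OF S] .
  have sub: "supp r (\<lambda>k. W k i) \<subseteq> S"
    using assms(5) i S unfolding stable_factorization_def by blast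
  have Sfin: "finite S" using S unfolding lex_first_def col_admissible_def
    using finite_subset by blast
  show "cols_lin_indep m A (supp r (\<lambda>k. W k i))"
    unfolding cols_lin_indep_def
  proof (intro allI impI ballI)
    fix c k assume c0: "\<forall>j<m. (\<Sum>k\<in>supp r (\<lambda>k. W k i). c k * A j k) = 0"
      and k: "k \<in> supp r (\<lambda>k. W k i)"
    define c' where "c' k = (if k \<in> supp r (\<lambda>k. W k i) then c k else 0)" for k
    have "\<forall>j<m. (\<Sum>k\<in>S. c' k * A j k) = 0"
    proof (intro allI impI)
      fix j assume "j < m"
      have "(\<Sum>k\<in>S. c' k * A j k) = (\<Sum>k\<in>supp r (\<lambda>k. W k i). c k * A j k)"
        unfolding c'_def
        by (rule sum.mono_neutral_cong_right[OF Sfin sub]) auto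
      then show "(\<Sum>k\<in>S. c' k * A j k) = 0" using c0 \<open>j < m\<close> by simp
    qed
    then have "c' k = 0" using ind k sub unfolding cols_lin_indep_def by blast
    then show "c k = 0" using k c'_def by simp
  qed
qed

end
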